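(* Let $\lambda=(\lambda_1,\ldots,\lambda_k)\in\mathcal P_k$, let $\mu$ be a partition maximal for $\lambda$, and let $P(\lambda)=(P_1,\ldots,P_r)$. If $i\in P_{h+1}$ for some $0\le h<r$, then $\mu_i=\lambda_i+\operatorname{sylv}(\lambda^{(h)})$.
   Context: A partition is a weakly decreasing sequence of nonnegative integers; $\mathcal P_k$ is the set of partitions with at most $k$ nonzero parts, written as sequences $(\lambda_1,\ldots,\lambda_k)$ (trailing zeros allowed), identified with Young diagrams; $|\lambda|=\sum\lambda_i$. For $\lambda\subseteq\mu$ in $\mathcal P_k$, ${\sf Tab}(\mu/\lambda)$ is the set of fillings of $\mu/\lambda$ with entries in $\{1,\ldots,k\}$ strictly increasing along rows (left to right) and columns (top to bottom), with every entry in row $i$ at most $i-1$. $\mu$ is maximal for $\lambda$ if ${\sf Tab}(\mu/\lambda)\ne\emptyset$ and ${\sf Tab}(\nu/\lambda)=\emptyset$ whenever $\nu\in\mathcal P_k$, $\lambda\subseteq\nu$, $|\nu|>|\mu|$. $P(\lambda)=(P_1,\ldots,P_r)$ is the ordered set partition of $\{1,\ldots,k\}$ into blocks of indices with equal parts: $i,j$ lie in the same block iff $\lambda_i=\lambda_j$, and $\lambda_i>\lambda_j$ whenever $i\in P_h$, $j\in P_l$ with $h<l$. Set $\lambda^{(0)}=\emptyset$, $\lambda^{(r)}=\lambda$, and for $1\le h\le r-1$, $\lambda^{(h)}=(\lambda_1-\lambda_i,\lambda_2-\lambda_i,\ldots,\lambda_{i-1}-\lambda_i)$ where $i=\min P_{h+1}$.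 For $n\ge1$ let $\delta^n=(n,n-1,\ldots,1)$ be the staircase, and for a partition $\nu$ let $\operatorname{sylv}(\nu)=\max\{m\ge 0:\delta^m\subseteq\nu\}$ (with $\delta^0=\emptyset$). *)

theory Defs
  imports Main
begin

text \<open>Partitions in P_k are lists of length k (trailing zeros allowed); the paper's
  1-indexed part lambda_i is the list entry at position i - 1.\<close>

definition is_partition :: "nat \<Rightarrow> nat list \<Rightarrow> bool" where
  "is_partition k lam \<longleftrightarrow> length lam = k \<and> sorted_wrt (\<ge>) lam"

definition part :: "nat list \<Rightarrow> nat \<Rightarrow> nat" where
  "part lam i = (if 1 \<le> i \<and> i \<le> length lam then lam ! (i - 1) else 0)"

definition size_part :: "nat list \<Rightarrow> nat" where
  "size_part lam = sum_list lam"

definition contained :: "nat list \<Rightarrow> nat list \<Rightarrow> bool" where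
  "contained lam mu \<longleftrightarrow> (\<forall>i. part lam i \<le> part mu i)"

definition skew_cells :: "nat list \<Rightarrow> nat list \<Rightarrow> (nat \<times> nat) set" where
  "skew_cells mu lam = {(i, j). 1 \<le> i \<and> part lam i < j \<and> j \<le> part mu i}"

definition Tab :: "nat \<Rightarrow> nat list \<Rightarrow> nat list \<Rightarrow> ((nat \<times> nat) \<Rightarrow> nat) set" where
  "Tab k mu lam = {T.
     (\<forall>c. c \<notin> skew_cells mu lam \<longrightarrow> T c = 0) \<and>
     (\<forall>c \<in> skew_cells mu lam. 1 \<le> T c \<and> T c \<le> k) \<and>
     (\<forall>i j j'. (i, j) \<in> skew_cells mu lam \<longrightarrow> (i, j') \<in> skew_cells mu lam \<longrightarrow> j < j'
        \<longrightarrow> T (i, j) < T (i, j')) \<and>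
     (\<forall>i i' j. (i, j) \<in> skew_cells mu lam \<longrightarrow> (i', j) \<in> skew_cells mu lam \<longrightarrow> i < i'
        \<longrightarrow> T (i, j) < T (i', j)) \<and>
     (\<forall>i j. (i, j) \<in> skew_cells mu lam \<longrightarrow> T (i, j) \<le> i - 1)}"

definition maximal_for :: "nat \<Rightarrow> nat list \<Rightarrow> nat list \<Rightarrow> bool" where
  "maximal_for k lam mu \<longleftrightarrow>
     is_partition k mu \<and> contained lam mu \<and> Tab k mu lam \<noteq> {} \<and>
     (\<forall>nu. is_partition k nu \<and> contained lam nu \<and> size_part nu > size_part mu
        \<longrightarrow> Tab k nu lam = {})"

text \<open>Ordered set partition P(lam) = (P_1, ..., P_r): the distinct values of lam in
  decreasing order are v_1 > ... > v_r and P_h = {i. lambda_i = v_h}.\<close>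
definition block_values :: "nat list \<Rightarrow> nat list" where
  "block_values lam = rev (sorted_list_of_set (set lam))"

definition num_blocks :: "nat list \<Rightarrow> nat" where
  "num_blocks lam = length (block_values lam)"

definition block :: "nat list \<Rightarrow> nat \<Rightarrow> nat set" where
  "block lam h = {i. 1 \<le> i \<and> i \<le> length lam \<and> h \<ge> 1 \<and> h \<le> num_blocks lam \<and>
                      part lam i = block_values lam ! (h - 1)}"

definition lam_trunc :: "nat list \<Rightarrow> nat \<Rightarrow> nat list" where
  "lam_trunc lam h =
     (if h = 0 then []
      else if h = num_blocks lam then lam
      else (let i = Min (block lam (h + 1)) in map (\<lambda>j. part lam j - part lam i) [1..<i]))"

definition staircase :: "nat \<Rightarrow> nat list" where
  "staircase n = rev [1..<n + 1]"

definition sylv :: "nat list \<Rightarrow> nat" where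
  "sylv nu = (GREATEST m. contained (staircase m) nu)"

end

theory Submission
  imports Defs
begin

definition Cp :: "nat list \<Rightarrow> nat \<Rightarrow> nat \<Rightarrow> bool" where
  "Cp lam i d \<longleftrightarrow> (\<forall>t. 1 \<le> t \<and> t \<le> d \<longrightarrow> part lam i + (d + 1 - t) \<le> part lam t)"

definition sv :: "nat list \<Rightarrow> nat \<Rightarrow> nat" where
  "sv lam i = (GREATEST d. Cp lam i d)"

lemma Cp_bound: "Cp lam i d \<Longrightarrow> d \<le> part lam 1"
proof (cases "d = 0")
  case False
  assume "Cp lam i d"
  then have "part lam i + (d + 1 - 1) \<le> part lam 1" using False unfolding Cp_def by auto
  then show ?thesis by simp
qed simp

lemma Cp_sv: "Cp lam i (sv lam i)"
  unfolding sv_def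
  by (rule GreatestI_nat[where k=0 and b="part lam 1"]) (auto simp: Cp_def intro: Cp_bound)

lemma le_sv: "Cp lam i d \<Longrightarrow> d \<le> sv lam i"
  unfolding sv_def
  by (metis Cp_bound Greatest_le_nat)

lemma sv_le: "1 \<le> i \<Longrightarrow> sv lam i \<le> i - 1"
proof (rule ccontr)
  assume "1 \<le> i" "\<not> sv lam i \<le> i - 1"
  moreover have "Cp lam i (sv lam i)" by (rule Cp_sv)
  ultimately have "part lam i + (sv lam i + 1 - i) \<le> part lam i" unfolding Cp_def by auto
  with \<open>\<not> sv lam i \<le> i - 1\<close> show False by simp
qed

lemma part_mono:
  assumes "is_partition k lam" "1 \<le> i" "i \<le> i'"
  shows "part lam i' \<le> part lam i"
proof (cases "i' \<le> length lam")
  case True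
  have "sorted_wrt (\<ge>) lam" using assms(1) unfolding is_partition_def by simp
  then have "lam ! (i' - 1) \<le> lam ! (i - 1)"
    using True assms by (cases "i = i'") (auto simp: sorted_wrt_iff_nth_less)
  then show ?thesis using True assms by (simp add: part_def)
qed (simp add: part_def)

lemma sv_mono:
  assumes "is_partition k lam" "1 \<le> i" "i \<le> i'"
  shows "part lam i' + sv lam i' \<le> part lam i + sv lam i"
proof (cases "part lam i' + sv lam i' \<le> part lam i")
  case False
  define d where "d = part lam i' + sv lam i' - part lam i"
  have pm: "part lam i' \<le> part lam i" using part_mono[OF assms] .
  have "Cp lam i d"
    unfolding Cp_def
  proof (intro allI impI)
    fix t assume "1 \<le> t \<and> t \<le> d"
    then have "t \<le> sv lam i'" using pm d_def by auto
    with Cp_sv[of lam i'] \<open>1 \<le> t \<and> t \<le> d\<close>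
    have "part lam i' + (sv lam i' + 1 - t) \<le> part lam t" unfolding Cp_def by auto
    then show "part lam i + (d + 1 - t) \<le> part lam t" using d_def pm \<open>t \<le> sv lam i'\<close> False \<open>1 \<le> t \<and> t \<le> d\<close> by auto
  qed
  then have "d \<le> sv lam i" by (rule le_sv)
  then show ?thesis using d_def by auto
qed auto

lemma chain:
  fixes f :: "nat \<Rightarrow> nat"
  assumes "\<And>j. a \<le> j \<Longrightarrow> j < b \<Longrightarrow> f j < f (Suc j)" "a \<le> b"
  shows "f a + (b - a) \<le> f b"
  using assms
proof (induction b)
  case 0 then show ?case by simp
next
  case (Suc b)
  show ?case
  proof (cases "a = Suc b")
    case False
    then have "a \<le> b" using Suc.prems by simp
    then have "f a + (b - a) \<le> f b" using Suc by auto
    moreover have "f b < f (Suc b)" using Suc.prems \<open>a \<le> b\<close> by auto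
    ultimately show ?thesis using \<open>a \<le> b\<close> by (simp add: Suc_diff_le)
  qed simp
qed

lemma upper:
  assumes lp: "is_partition k lam" and mp: "is_partition k mu" and c: "contained lam mu"
    and T: "T \<in> Tab k mu lam" and i1: "1 \<le> i"
  shows "Cp lam i (part mu i - part lam i)"
proof -
  define v where "v = part lam i"
  define d where "d = part mu i - v"
  have row: "\<And>a b b'. (a, b) \<in> skew_cells mu lam \<Longrightarrow> (a, b') \<in> skew_cells mu lam \<Longrightarrow> b < b'
        \<Longrightarrow> T (a, b) < T (a, b')"
   and col: "\<And>a a' b. (a, b) \<in> skew_cells mu lam \<Longrightarrow> (a', b) \<in> skew_cells mu lam \<Longrightarrow> a < a'
        \<Longrightarrow> T (a, b) < T (a', b)"
   and rng: "\<And>c. c \<in> skew_cells mu lam \<Longrightarrow> 1 \<le> T c"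
   and ub: "\<And>a b. (a, b) \<in> skew_cells mu lam \<Longrightarrow> T (a, b) \<le> a - 1"
    using T unfolding Tab_def by auto
  have cell: "(i, v + c) \<in> skew_cells mu lam" if "1 \<le> c" "c \<le> d" for c
    using that i1 unfolding skew_cells_def d_def v_def by auto
  have rowchain: "T (i, v + c) + (d - c) \<le> T (i, v + d)" if "1 \<le> c" "c \<le> d" for c
  proof -
    have "\<And>j. c \<le> j \<Longrightarrow> j < d \<Longrightarrow> T (i, v + j) < T (i, v + Suc j)"
    proof -
      fix j assume "c \<le> j" "j < d"
      then show "T (i, v + j) < T (i, v + Suc j)"
        using that cell[of j] cell[of "Suc j"] row[of i "v + j" "v + Suc j"] by auto
    qed
    from chain[of c d "\<lambda>x. T (i, v + x)", OF this] that show ?thesis by simp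
  qed
  show ?thesis
    unfolding Cp_def
  proof (intro allI impI)
    fix t assume t0: "1 \<le> t \<and> t \<le> part mu i - part lam i"
    then have t: "1 \<le> t \<and> t \<le> d" using d_def v_def by simp
    have di: "d \<le> i - 1"
      using rowchain[of 1] t rng[OF cell[of 1]] ub[OF cell[of d]] by auto
    define c where "c = d + 1 - t"
    have c1: "1 \<le> c" "c \<le> d" using t c_def by auto
    show "part lam i + (part mu i - part lam i + 1 - t) \<le> part lam t"
    proof (rule ccontr)
      assume "\<not> ?thesis"
      then have lt: "part lam t < v + c" using c_def d_def v_def by auto
      have ccell: "(j, v + c) \<in> skew_cells mu lam" if "t \<le> j" "j \<le> i" for j
      proof -
        have "part lam j \<le> part lam t" using part_mono[OF lp, of t j] t that by auto
        moreover have "part mu i \<le> part mu j" using part_mono[OF mp, of j i] t that by auto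
        ultimately show ?thesis using lt c1 t that unfolding skew_cells_def d_def by auto
      qed
      have "T (t, v + c) + (i - t) \<le> T (i, v + c)"
        using chain[of t i "\<lambda>x. T (x, v + c)"] ccell col t di by auto
      moreover have "1 \<le> T (t, v + c)" using rng ccell[of t] t di by auto
      moreover have "T (i, v + c) + (d - c) \<le> i - 1"
        using rowchain[OF c1] ub[OF cell[of d]] c1 by auto
      ultimately show False using c_def t di by auto
    qed
  qed
qed

lemma part_staircase: "part (staircase d) t = (if 1 \<le> t \<and> t \<le> d then d + 1 - t else 0)"
proof (cases "1 \<le> t \<and> t \<le> d")
  case True
  have "rev [1..<d + 1] ! (t - 1) = [1..<d + 1] ! (d - t)"
    using True by (subst rev_nth) (auto simp del: upt_Suc)
  also have "\<dots> = d + 1 - t" using True by (subst nth_upt) auto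
  finally show ?thesis using True by (simp add: part_def staircase_def del: upt_Suc)
qed (auto simp: part_def staircase_def)

lemma bv0_max:
  assumes "x \<in> set lam"
  shows "x \<le> block_values lam ! 0"
proof -
  define xs where "xs = sorted_list_of_set (set lam)"
  have s: "sorted xs" and st: "set xs = set lam" using xs_def by auto
  obtain j where j: "j < length xs" "xs ! j = x" using assms st by (metis in_set_conv_nth)
  have "xs ! j \<le> xs ! (length xs - 1)" using s j by (intro sorted_nth_mono) auto
  moreover have "block_values lam ! 0 = xs ! (length xs - 1)"
    using j unfolding block_values_def xs_def[symmetric] by (subst rev_nth) auto
  ultimately show ?thesis using j by simp
qed

lemma K:
  assumes lp: "is_partition k lam" and h: "h < num_blocks lam" and i: "i \<in> block lam (h + 1)"
  shows "contained (staircase d) (lam_trunc lam h) \<longleftrightarrow> Cp lam i d"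
proof -
  have i1: "1 \<le> i" "i \<le> length lam" "part lam i = block_values lam ! h"
    using i unfolding block_def by auto
  show ?thesis
  proof (cases "h = 0")
    case True
    have "lam ! 0 \<in> set lam" using i1 by (intro nth_mem) auto
    then have "part lam 1 \<le> part lam i"
      using bv0_max[of "lam ! 0" lam] i1 True by (auto simp: part_def)
    then have "Cp lam i d \<longleftrightarrow> d = 0"
      unfolding Cp_def by (auto dest: spec[of _ 1])
    moreover have "contained (staircase d) [] \<longleftrightarrow> d = 0"
    proof
      assume "contained (staircase d) []"
      then have "part (staircase d) 1 \<le> part [] 1" unfolding contained_def by blast
      moreover have "part [] 1 = 0" by (simp add: part_def)
      ultimately show "d = 0" by (simp add: part_staircase split: if_splits)
    qed (auto simp: contained_def part_staircase part_def staircase_def)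
    ultimately show ?thesis using True by (simp add: lam_trunc_def)
  next
    case False
    define B where "B = block lam (h + 1)"
    define m where "m = Min B"
    have fin: "finite B" unfolding B_def block_def by (rule finite_subset[of _ "{..length lam}"]) auto
    have iB: "i \<in> B" using i B_def by simp
    then have ne: "B \<noteq> {}" by auto
    have mB: "m \<in> B" unfolding m_def by (rule Min_in[OF fin ne])
    have mi: "m \<le> i" unfolding m_def by (rule Min_le[OF fin iB])
    have m1: "1 \<le> m" "part lam m = part lam i" using mB i1 unfolding B_def block_def by auto
    have above: "part lam m < part lam t" if "1 \<le> t" "t < m" for t
    proof -
      have "t \<notin> B" using fin that m_def by (meson Min_le not_le)
      then have "part lam t \<noteq> part lam m" using that mi i1 i m1 unfolding B_def block_def by auto
      moreover have "part lam m \<le> part lam t" using part_mono[OF lp] that by auto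
      ultimately show ?thesis by simp
    qed
    have below: "part lam t \<le> part lam m" if "m \<le> t" for t
      using part_mono[OF lp m1(1) that] .
    have lt: "lam_trunc lam h = map (\<lambda>j. part lam j - part lam m) [1..<m]"
      using False h unfolding lam_trunc_def m_def B_def by (simp add: Let_def)
    have pL: "part (lam_trunc lam h) t = (if 1 \<le> t \<and> t < m then part lam t - part lam m else 0)" for t
      unfolding lt by (auto simp: part_def)
    show ?thesis
    proof
      assume "contained (staircase d) (lam_trunc lam h)"
      then have cc: "\<And>t. part (staircase d) t \<le> part (lam_trunc lam h) t" unfolding contained_def by auto
      show "Cp lam i d" unfolding Cp_def
      proof (intro allI impI)
        fix t assume t: "1 \<le> t \<and> t \<le> d"
        have "d + 1 - t \<le> part (lam_trunc lam h) t" using cc[of t] t by (simp add: part_staircase)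
        then show "part lam i + (d + 1 - t) \<le> part lam t" using t m1 by (simp add: pL split: if_splits)
      qed
    next
      assume C: "Cp lam i d"
      show "contained (staircase d) (lam_trunc lam h)" unfolding contained_def
      proof
        fix t
        show "part (staircase d) t \<le> part (lam_trunc lam h) t"
        proof (cases "1 \<le> t \<and> t \<le> d")
          case True
          then have "part lam i + (d + 1 - t) \<le> part lam t" using C unfolding Cp_def by auto
          moreover have "t < m"
          proof (rule ccontr)
            assume "\<not> t < m"
            then have "part lam t \<le> part lam m" by (intro below) simp
            then show False using calculation True m1 by linarith
          qed
          ultimately show ?thesis using True m1 by (simp add: pL part_staircase)
        next
          case False then show ?thesis by (auto simp: part_staircase)
        qed
      qed
    qed
  qed
qed

theorem proposition3p10:
  fixes k h i :: nat and lam mu :: "nat list"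
  assumes "is_partition k lam"
    and "maximal_for k lam mu"
    and "h < num_blocks lam"
    and "i \<in> block lam (h + 1)"
  shows "part mu i = part lam i + sylv (lam_trunc lam h)"
proof -
  note lp = assms(1)
  have mp: "is_partition k mu" and cmu: "contained lam mu" and Tne: "Tab k mu lam \<noteq> {}"
    and maxi: "\<And>nu. is_partition k nu \<Longrightarrow> contained lam nu \<Longrightarrow> size_part nu > size_part mu
        \<Longrightarrow> Tab k nu lam = {}"
    using assms(2) unfolding maximal_for_def by auto
  obtain T where T: "T \<in> Tab k mu lam" using Tne by auto
  have lk: "length lam = k" "length mu = k" using lp mp unfolding is_partition_def by auto
  have i1: "1 \<le> i" "i \<le> k" using assms(4) lk unfolding block_def by auto
  define M where "M = map (\<lambda>j. part lam j + sv lam j) [1..<k+1]"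
  have lM: "length M = k" unfolding M_def by simp
  have nM: "M ! a = part lam (Suc a) + sv lam (Suc a)" if "a < k" for a
    using that unfolding M_def by (simp add: nth_upt del: upt_Suc)
  have pM: "part M a = (if 1 \<le> a \<and> a \<le> k then part lam a + sv lam a else 0)" for a
    using nM[of "a - 1"] lM by (auto simp: part_def)
  have isM: "is_partition k M"
    unfolding is_partition_def sorted_wrt_iff_nth_less
  proof (intro conjI lM allI impI)
    fix a b assume "a < b" "b < length M"
    then show "M ! b \<le> M ! a" using nM lM sv_mono[OF lp, of "Suc a" "Suc b"] by auto
  qed
  have cM: "contained lam M" unfolding contained_def
  proof
    fix a show "part lam a \<le> part M a"
    proof (cases "1 \<le> a \<and> a \<le> k")
      case True then show ?thesis by (simp add: pM)
    next
      case False then show ?thesis using lk by (auto simp: part_def)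
    qed
  qed
  have svb: "sv lam a \<le> a - 1" if "1 \<le> a" for a using sv_le that .
  define TT where "TT = (\<lambda>(a, b). if (a, b) \<in> skew_cells M lam then a + b - 1 - part M a else 0)"
  have cellM: "1 \<le> a \<and> a \<le> k \<and> part lam a < b \<and> b \<le> part lam a + sv lam a"
    if "(a, b) \<in> skew_cells M lam" for a b
    using that unfolding skew_cells_def by (auto simp: pM split: if_splits)
  have TTv: "TT (a, b) = a + b - 1 - part M a \<and> 1 \<le> TT (a, b) \<and> TT (a, b) \<le> a - 1
      \<and> a + b = TT (a, b) + 1 + part M a"
    if "(a, b) \<in> skew_cells M lam" for a b
  proof -
    have c: "1 \<le> a" "a \<le> k" "part lam a < b" "b \<le> part lam a + sv lam a"
      using cellM[OF that] by auto
    have pMa: "part M a = part lam a + sv lam a" using c by (simp add: pM)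
    have s: "sv lam a \<le> a - 1" using svb c by simp
    have t: "TT (a, b) = a + b - 1 - part M a" unfolding TT_def using that by simp
    have s': "sv lam a + 1 \<le> a" using s c by linarith
    define P where "P = part lam a + sv lam a"
    have ab: "P + 1 \<le> a + b - 1" using c s' P_def by linarith
    have bP: "b \<le> P" using c P_def by simp
    show ?thesis unfolding t pMa P_def[symmetric]
    proof (intro conjI)
      show "1 \<le> a + b - 1 - P" using ab by linarith
      show "a + b - 1 - P \<le> a - 1" using bP by linarith
      show "a + b = a + b - 1 - P + 1 + P" using ab by linarith
    qed simp
  qed
  have A1: "\<forall>c. c \<notin> skew_cells M lam \<longrightarrow> TT c = 0"
  proof (intro allI impI)
    fix c assume "c \<notin> skew_cells M lam"
    then show "TT c = 0" unfolding TT_def by (cases c) simp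
  qed
  have A2: "\<forall>c \<in> skew_cells M lam. 1 \<le> TT c \<and> TT c \<le> k"
  proof
    fix c assume "c \<in> skew_cells M lam"
    moreover obtain a b where c0: "c = (a, b)" by (cases c)
    ultimately have c: "c = (a, b)" "(a, b) \<in> skew_cells M lam" by simp_all
    have f1: "1 \<le> TT (a, b)" "TT (a, b) \<le> a - 1" using TTv[OF c(2)] by blast+
    have f2: "a \<le> k" using cellM[OF c(2)] by blast
    from f1 f2 show "1 \<le> TT c \<and> TT c \<le> k" unfolding c(1) by linarith
  qed
  have A3: "\<forall>a b b'. (a, b) \<in> skew_cells M lam \<longrightarrow> (a, b') \<in> skew_cells M lam \<longrightarrow> b < b'
        \<longrightarrow> TT (a, b) < TT (a, b')"
  proof (intro allI impI)
    fix a b b' assume B: "(a, b) \<in> skew_cells M lam" "(a, b') \<in> skew_cells M lam" "b < b'"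
    have e1: "a + b = TT (a, b) + 1 + part M a" using TTv[OF B(1)] by blast
    have e2: "a + b' = TT (a, b') + 1 + part M a" using TTv[OF B(2)] by blast
    show "TT (a, b) < TT (a, b')" using e1 e2 B(3) by linarith
  qed
  have A4: "\<forall>a a' b. (a, b) \<in> skew_cells M lam \<longrightarrow> (a', b) \<in> skew_cells M lam \<longrightarrow> a < a'
        \<longrightarrow> TT (a, b) < TT (a', b)"
  proof (intro allI impI)
    fix a a' b assume B: "(a, b) \<in> skew_cells M lam" "(a', b) \<in> skew_cells M lam" "a < a'"
    have a1: "1 \<le> a" using cellM[OF B(1)] by blast
    have pm: "part M a' \<le> part M a" using part_mono[OF isM a1] B(3) by simp
    have e1: "a + b = TT (a, b) + 1 + part M a" using TTv[OF B(1)] by blast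
    have e2: "a' + b = TT (a', b) + 1 + part M a'" using TTv[OF B(2)] by blast
    show "TT (a, b) < TT (a', b)" using e1 e2 B(3) pm by linarith
  qed
  have A5: "\<forall>a b. (a, b) \<in> skew_cells M lam \<longrightarrow> TT (a, b) \<le> a - 1"
    using TTv by blast
  have "TT \<in> Tab k M lam"
    unfolding Tab_def mem_Collect_eq using A1 A2 A3 A4 A5 by blast
  then have TMne: "Tab k M lam \<noteq> {}" by auto
  have le: "part mu a \<le> part M a" for a
  proof (cases "1 \<le> a \<and> a \<le> k")
    case True
    have "Cp lam a (part mu a - part lam a)" using upper[OF lp mp cmu T] True by simp
    then have "part mu a - part lam a \<le> sv lam a" by (rule le_sv)
    then show ?thesis using True by (simp add: pM)
  next
    case False then show ?thesis using lk by (auto simp: part_def)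
  qed
  have eq: "part mu i = part M i"
  proof (rule ccontr)
    assume "part mu i \<noteq> part M i"
    then have lt: "part mu i < part M i" using le[of i] by simp
    have "(\<Sum>j<k. mu ! j) < (\<Sum>j<k. M ! j)"
    proof (rule sum_strict_mono_ex1)
      show "finite {..<k}" by simp
      show "\<forall>j\<in>{..<k}. mu ! j \<le> M ! j"
      proof
        fix j assume "j \<in> {..<k}"
        then show "mu ! j \<le> M ! j" using le[of "Suc j"] lk lM by (simp add: part_def)
      qed
      show "\<exists>j\<in>{..<k}. mu ! j < M ! j"
        using lt i1 lk lM by (intro bexI[of _ "i - 1"]) (auto simp: part_def)
    qed
    then have "size_part M > size_part mu"
      unfolding size_part_def using lk lM by (simp add: sum_list_sum_nth atLeast0LessThan)
    then show False using maxi[OF isM cM] TMne by simp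
  qed
  have "sylv (lam_trunc lam h) = sv lam i"
    unfolding sylv_def sv_def using K[OF lp assms(3) assms(4)] by simp
  then show ?thesis using eq i1 by (simp add: pM)
qed

end
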